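(* Let $\mathcal{T}$ be a finite nonempty set of positive integers and let $A\in\mathbb{R}$ with $|A|\ne1$ and $A\ne0$. Then $$\frac{\big(\sum_{t\in\mathcal{T}}A^t\big)^2}{\sum_{t\in\mathcal{T}}A^{2t}}\le\frac{1+|A|}{\big|1-|A|\big|}.$$ *)

theory Defs
  imports Complex_Main
begin

end

theory Submission
  imports Defs
begin

lemma geo_up: "(1 - a) * (\<Sum>k\<in>{m..<m+n}. (a::real) ^ k) = a ^ m - a ^ (m + n)"
proof (induction n)
  case 0 then show ?case by simp
next
  case (Suc n)
  have "{m..<m + Suc n} = insert (m+n) {m..<m+n}" by auto
  then have "(\<Sum>k\<in>{m..<m+Suc n}. a ^ k) = a^(m+n) + (\<Sum>k\<in>{m..<m+n}. a ^ k)" by simp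
  then have "(1 - a) * (\<Sum>k\<in>{m..<m+Suc n}. a ^ k) = (1-a)*a^(m+n) + (1-a)*(\<Sum>k\<in>{m..<m+n}. a ^ k)"
    by (simp add: distrib_left)
  also have "\<dots> = (1-a)*a^(m+n) + (a ^ m - a ^ (m + n))" using Suc by simp
  also have "\<dots> = a^m - a^(m + Suc n)" by (simp add: algebra_simps)
  finally show ?case .
qed

lemma geo_low: "(a - 1) * (\<Sum>k<n. (a::real) ^ k) = a ^ n - 1"
  by (induction n) (auto simp: algebra_simps)

lemma tail_small:
  fixes a :: real
  assumes "finite A" "\<forall>x\<in>A. b < x" "0 \<le> a" "a < 1"
  shows "(1 - a) * (\<Sum>x\<in>A. a ^ x) \<le> a ^ (b + 1)"
proof -
  define N where "N = Max (insert (b+1) A) + 1"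
  have sub: "A \<subseteq> {b+1..<(b+1) + (N - (b+1))}"
  proof
    fix x assume "x \<in> A"
    then have "x \<le> Max (insert (b+1) A)" using assms(1) by simp
    then show "x \<in> {b+1..<(b+1) + (N - (b+1))}" using assms(2) \<open>x \<in> A\<close> unfolding N_def by auto
  qed
  have "(\<Sum>x\<in>A. a ^ x) \<le> (\<Sum>k\<in>{b+1..<(b+1) + (N - (b+1))}. a ^ k)"
    by (rule sum_mono2[OF _ sub]) (use assms in auto)
  then have "(1 - a) * (\<Sum>x\<in>A. a ^ x) \<le> (1-a) * (\<Sum>k\<in>{b+1..<(b+1) + (N - (b+1))}. a ^ k)"
    using assms by (intro mult_left_mono) auto
  also have "\<dots> = a^(b+1) - a^((b+1) + (N - (b+1)))" by (rule geo_up)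
  also have "\<dots> \<le> a^(b+1)" using assms by simp
  finally show ?thesis .
qed

lemma head_small:
  fixes a :: real
  assumes "finite A" "\<forall>x\<in>A. x < b" "1 < a"
  shows "(a - 1) * (\<Sum>x\<in>A. a ^ x) \<le> a ^ b"
proof -
  have "(\<Sum>x\<in>A. a ^ x) \<le> (\<Sum>k<b. a ^ k)"
    by (rule sum_mono2) (use assms in auto)
  then have "(a - 1) * (\<Sum>x\<in>A. a ^ x) \<le> (a-1) * (\<Sum>k<b. a ^ k)"
    using assms by (intro mult_left_mono) auto
  also have "\<dots> = a^b - 1" by (rule geo_low)
  finally show ?thesis by simp
qed

lemma small_case:
  fixes a :: real
  assumes "finite T" "0 \<le> a" "a < 1"
  shows "(1 - a) * (\<Sum>t\<in>T. a ^ t)\<^sup>2 \<le> (1 + a) * (\<Sum>t\<in>T. a ^ (2*t))"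
  using assms(1)
proof (induction T rule: finite_linorder_min_induct)
  case empty then show ?case by simp
next
  case (insert b A)
  have nb: "b \<notin> A" using insert by auto
  define S where "S = (\<Sum>x\<in>A. a ^ x)"
  define Q where "Q = (\<Sum>x\<in>A. a ^ (2*x))"
  have t: "(1 - a) * S \<le> a ^ (b+1)" unfolding S_def using tail_small insert assms by blast
  have S0: "0 \<le> S" unfolding S_def using assms by (auto intro: sum_nonneg)
  have IH: "(1 - a) * S\<^sup>2 \<le> (1 + a) * Q" using insert unfolding S_def Q_def by simp
  have ab: "0 \<le> a^b" using assms by simp
  have "2 * a^b * ((1 - a) * S) \<le> 2 * a^b * a^(b+1)"
    using t ab by (intro mult_left_mono) auto
  moreover have "2 * a^b * ((1 - a) * S) = (1-a) * (2 * a^b * S)" by (simp only: ac_simps)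
  moreover have "2 * a^b * a^(b+1) = 2 * a * (a^b)^2" by (simp add: power2_eq_square)
  ultimately have k: "(1-a) * (2 * a^b * S) \<le> 2 * a * (a^b)^2" by metis
  have "(1 - a) * (a^b + S)\<^sup>2 = (1-a)*(a^b)^2 + (1-a)*(2*a^b*S) + (1-a)*S\<^sup>2"
    by (simp add: algebra_simps power2_eq_square)
  also have "\<dots> \<le> (1 + a) * ((a^b)^2 + Q)"
  proof -
    have "(1+a)*((a^b)^2+Q) = (1-a)*(a^b)^2 + 2*a*(a^b)^2 + (1+a)*Q" by (simp add: algebra_simps)
    then show ?thesis using k IH by linarith
  qed
  finally have fin: "(1 - a) * (a^b + S)\<^sup>2 \<le> (1 + a) * ((a^b)^2 + Q)" .
  moreover have sx: "(\<Sum>x\<in>insert b A. a ^ x) = a^b + S" using nb insert(1) by (simp add: S_def)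
  moreover have "(\<Sum>x\<in>insert b A. a ^ (2*x)) = (a^b)^2 + Q" using nb insert(1)
    by (simp add: Q_def power_mult[symmetric] mult.commute[of 2])
  ultimately show ?case by (simp only: sx)
qed

lemma big_case:
  fixes a :: real
  assumes "finite T" "1 < a"
  shows "(a - 1) * (\<Sum>t\<in>T. a ^ t)\<^sup>2 \<le> (a + 1) * (\<Sum>t\<in>T. a ^ (2*t))"
  using assms(1)
proof (induction T rule: finite_linorder_max_induct)
  case empty then show ?case by simp
next
  case (insert b A)
  have nb: "b \<notin> A" using insert by auto
  define S where "S = (\<Sum>x\<in>A. a ^ x)"
  define Q where "Q = (\<Sum>x\<in>A. a ^ (2*x))"
  have t: "(a - 1) * S \<le> a ^ b" unfolding S_def using head_small insert assms by blast
  have IH: "(a - 1) * S\<^sup>2 \<le> (a + 1) * Q" using insert unfolding S_def Q_def by simp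
  have ab: "0 \<le> a^b" using assms by simp
  have "2 * a^b * ((a - 1) * S) \<le> 2 * a^b * a^b"
    using t ab by (intro mult_left_mono) auto
  moreover have "2 * a^b * ((a - 1) * S) = (a-1) * (2 * a^b * S)" by (simp only: ac_simps)
  moreover have "2 * a^b * a^b = 2 * (a^b)^2" by (simp add: power2_eq_square)
  ultimately have k: "(a-1) * (2 * a^b * S) \<le> 2 * (a^b)^2" by metis
  have "(a - 1) * (a^b + S)\<^sup>2 = (a-1)*(a^b)^2 + (a-1)*(2*a^b*S) + (a-1)*S\<^sup>2"
    by (simp add: algebra_simps power2_eq_square)
  also have "\<dots> \<le> (a + 1) * ((a^b)^2 + Q)"
  proof -
    have "(a+1)*((a^b)^2+Q) = (a-1)*(a^b)^2 + 2*(a^b)^2 + (a+1)*Q" by (simp add: algebra_simps)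
    then show ?thesis using k IH by linarith
  qed
  finally have fin: "(a - 1) * (a^b + S)\<^sup>2 \<le> (a + 1) * ((a^b)^2 + Q)" .
  moreover have sx: "(\<Sum>x\<in>insert b A. a ^ x) = a^b + S" using nb insert(1) by (simp add: S_def)
  moreover have "(\<Sum>x\<in>insert b A. a ^ (2*x)) = (a^b)^2 + Q" using nb insert(1)
    by (simp add: Q_def power_mult[symmetric] mult.commute[of 2])
  ultimately show ?case by (simp only: sx)
qed

theorem proposition4:
  fixes T :: "nat set" and A :: real
  assumes "finite T" and "T \<noteq> {}" and "\<forall>t\<in>T. t > 0"
    and "\<bar>A\<bar> \<noteq> 1" and "A \<noteq> 0"
  shows "(\<Sum>t\<in>T. A ^ t)\<^sup>2 / (\<Sum>t\<in>T. A ^ (2 * t))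
         \<le> (1 + \<bar>A\<bar>) / \<bar>1 - \<bar>A\<bar>\<bar>"
proof -
  define a where "a = \<bar>A\<bar>"
  have a0: "0 < a" using assms unfolding a_def by simp
  have Qeq: "(\<Sum>t\<in>T. A ^ (2 * t)) = (\<Sum>t\<in>T. a ^ (2 * t))"
    unfolding a_def by (simp add: power_mult power2_abs)
  have Qpos: "0 < (\<Sum>t\<in>T. a ^ (2 * t))"
    using assms a0 by (intro sum_pos) auto
  have "\<bar>\<Sum>t\<in>T. A ^ t\<bar> \<le> (\<Sum>t\<in>T. a ^ t)"
    unfolding a_def power_abs[symmetric] by (rule sum_abs)
  then have Sle: "(\<Sum>t\<in>T. A ^ t)\<^sup>2 \<le> (\<Sum>t\<in>T. a ^ t)\<^sup>2"
    by (metis abs_ge_zero power2_abs power_mono)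
  have main: "\<bar>1 - a\<bar> * (\<Sum>t\<in>T. a ^ t)\<^sup>2 \<le> (1 + a) * (\<Sum>t\<in>T. a ^ (2*t))"
  proof (cases "a < 1")
    case True
    then have "\<bar>1 - a\<bar> = 1 - a" by simp
    then show ?thesis using small_case[OF assms(1), of a] a0 True by simp
  next
    case False
    then have "1 < a" using assms(4) unfolding a_def by simp
    then have "\<bar>1 - a\<bar> = a - 1" by simp
    then show ?thesis using big_case[OF assms(1), of a] \<open>1 < a\<close> by (simp only: add.commute)
  qed
  have d: "0 < \<bar>1 - a\<bar>" using assms(4) unfolding a_def by simp
  have "(\<Sum>t\<in>T. A ^ t)\<^sup>2 / (\<Sum>t\<in>T. A ^ (2 * t)) \<le> (\<Sum>t\<in>T. a ^ t)\<^sup>2 / (\<Sum>t\<in>T. a ^ (2 * t))"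
    unfolding Qeq using Sle Qpos by (intro divide_right_mono) auto
  also have "\<dots> \<le> (1 + a) / \<bar>1 - a\<bar>"
  proof -
    have "(\<Sum>t\<in>T. a ^ t)\<^sup>2 \<le> (1 + a) * (\<Sum>t\<in>T. a ^ (2*t)) / \<bar>1 - a\<bar>"
      using main d by (subst le_divide_eq) (simp add: mult.commute)
    then show ?thesis using Qpos by (subst divide_le_eq) (simp add: mult.commute)
  qed
  finally show ?thesis unfolding a_def .
qed

end
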